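(* If $P$ is a finite poset, then the interval monoid $\mathcal{M}(P)$ embeds into a finitely generated free monoid.
   Context: For a poset $P$, the interval monoid $\mathcal{M}(P)$ is the monoid presented by generators $[x,y]$ for $x\le y$ in $P$ and relations $[x,x]=1$ ($x\in P$) and $[x,z]=[x,y][y,z]$ whenever $x\le y\le z$. *)

theory Defs
  imports Main
begin

text \<open>Words in the generators [x,y] (x \<le> y) of the interval monoid, represented as
  lists of pairs (x,y).\<close>
definition interval_words :: "('a::order \<times> 'a) list set" where
  "interval_words = {w. \<forall>(x,y)\<in>set w. x \<le> y}"

text \<open>The interval monoid M(P)
  is the quotient of interval_words by this congruence.\<close>
inductive interval_cong :: "('a::order \<times> 'a) list \<Rightarrow> ('a \<times> 'a) list \<Rightarrow> bool" where
  unit_rel: "interval_cong [(x,x)] []"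
| comp_rel: "x \<le> y \<Longrightarrow> y \<le> z \<Longrightarrow> interval_cong [(x,z)] [(x,y),(y,z)]"
| refl: "interval_cong w w"
| sym: "interval_cong u v \<Longrightarrow> interval_cong v u"
| trans: "interval_cong u v \<Longrightarrow> interval_cong v w \<Longrightarrow> interval_cong u w"
| ctxt: "interval_cong u v \<Longrightarrow> interval_cong (a @ u @ b) (a @ v @ b)"

text \<open>M(P) embeds into the free monoid A* on a finite alphabet A (here A \<subseteq> nat):
  there is an assignment f of words over A to the generators such that the induced
  monoid homomorphism identifies two words exactly when they are congruent.\<close>
definition embeds_in_fg_free_monoid :: "('a::order) itself \<Rightarrow> bool" where
  "embeds_in_fg_free_monoid _ \<longleftrightarrow>
     (\<exists>(A::nat set) (f :: 'a \<times> 'a \<Rightarrow> nat list).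
        finite A \<and>
        (\<forall>x y. x \<le> y \<longrightarrow> set (f (x,y)) \<subseteq> A) \<and>
        (\<forall>u\<in>interval_words. \<forall>v\<in>interval_words.
            concat (map f u) = concat (map f v) \<longleftrightarrow> interval_cong u v))"

end

theory Submission
  imports Defs
begin

fun dec :: "nat list \<Rightarrow> (nat \<times> nat) list" where
  "dec [] = []"
| "dec (a # w) = (case dec w of [] \<Rightarrow> [(a, Suc a)]
     | (c,d)#r \<Rightarrow> (if c = Suc a then (a,d)#r else (a,Suc a)#(c,d)#r))"

lemma dec_upt:
  "a < b \<Longrightarrow> dec ([a..<b] @ w) = (case dec w of [] \<Rightarrow> [(a, b)]
     | (c,d)#r \<Rightarrow> (if c = b then (a,d)#r else (a,b)#(c,d)#r))"
proof (induction b arbitrary: w)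
  case 0 then show ?case by simp
next
  case (Suc b)
  show ?case
  proof (cases "a = b")
    case True then show ?thesis by (simp split: list.splits prod.splits)
  next
    case False
    then have ab: "a < b" using Suc.prems by simp
    have "[a..<Suc b] @ w = [a..<b] @ (b # w)" using ab by simp
    then show ?thesis using Suc.IH[OF ab, of "b # w"]
      by (auto split: list.splits prod.splits)
  qed
qed

lemma cong_cons: "interval_cong u v \<Longrightarrow> interval_cong (p # u) (p # v)"
  using interval_cong.ctxt[of u v "[p]" "[]"] by simp

theorem proposition8p2:
  shows "embeds_in_fg_free_monoid TYPE('a::{order,finite})"
proof -
  define K where "K = card (UNIV :: 'a set)"
  obtain h :: "'a \<Rightarrow> nat" where h: "bij_betw h UNIV {0..<K}"
    using ex_bij_betw_finite_nat[of "UNIV :: 'a set"] unfolding K_def by auto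
  define c :: "'a \<Rightarrow> nat" where "c x = card {z. z < x}" for x
  define num where "num x = c x * K + h x" for x
  have hK: "h x < K" for x using h by (auto simp: bij_betw_def)
  have hinj: "inj h" using h by (auto simp: bij_betw_def)
  have cmono: "x < y \<Longrightarrow> c x < c y" for x y
    unfolding c_def
    by (rule psubset_card_mono) (auto dest: less_trans)
  have nmono: "x < y \<Longrightarrow> num x < num y" for x y
  proof -
    assume "x < y"
    then have "c x + 1 \<le> c y" using cmono by fastforce
    then have "(c x + 1) * K \<le> c y * K" by (rule mult_right_mono) simp
    then show ?thesis unfolding num_def using hK[of x] by simp
  qed
  have nle: "x \<le> y \<Longrightarrow> num x \<le> num y" for x y
    using nmono[of x y] by (cases "x = y") (auto simp: order_less_le)
  have ninj: "inj num"
  proof (rule injI)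
    fix x y assume "num x = num y"
    then have "num x mod K = num y mod K" by simp
    then have "h x = h y" unfolding num_def using hK by simp
    then show "x = y" using hinj by (auto dest: injD)
  qed
  define f where "f p = [num (fst p)..<num (snd p)]" for p
  define N where "N p = (num (fst p), num (snd p))" for p
  have fwd: "interval_cong u v \<Longrightarrow> concat (map f u) = concat (map f v)" for u v
  proof (induction rule: interval_cong.induct)
    case (comp_rel x y z)
    then show ?case using upt_add_eq_append[OF nle[OF comp_rel(1)], of "num z - num y"] nle[OF comp_rel(2)]
      by (simp add: f_def)
  qed (auto simp: f_def)
  have key: "u \<in> interval_words \<Longrightarrow> \<exists>R. R \<in> interval_words \<and>
      (\<forall>(x,y)\<in>set R. x < y) \<and>
      dec (concat (map f u)) = map N R \<and> interval_cong u R" for u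
  proof (induction u)
    case Nil then show ?case
      by (auto simp: interval_words_def intro: interval_cong.refl)
  next
    case (Cons p u)
    obtain x y where p: "p = (x,y)" by fastforce
    have xy: "x \<le> y" and uw: "u \<in> interval_words"
      using Cons.prems p by (auto simp: interval_words_def)
    obtain R where R: "R \<in> interval_words" "\<forall>(x,y)\<in>set R. x < y"
      "dec (concat (map f u)) = map N R" "interval_cong u R"
      using Cons.IH[OF uw] by blast
    show ?case
    proof (cases "x = y")
      case True
      have "interval_cong (p # u) u"
        using interval_cong.ctxt[OF interval_cong.unit_rel[of x], of "[]" u] p True by simp
      then show ?thesis using R p True
        by (intro exI[of _ R]) (auto simp: f_def[of "(y,y)"] intro: interval_cong.trans)
    next
      case False
      then have xy': "x < y" using xy by simp
      have nx: "num x < num y" using nmono[OF xy'] .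
      have eq: "dec (concat (map f (p # u))) = (case map N R of [] \<Rightarrow> [(num x, num y)]
         | (c,d)#r \<Rightarrow> (if c = num y then (num x,d)#r else (num x,num y)#(c,d)#r))"
        using dec_upt[OF nx, of "concat (map f u)"] R(3) p by (simp add: f_def)
      show ?thesis
      proof (cases R)
        case Nil
        then show ?thesis using eq R p xy'
          by (intro exI[of _ "[(x,y)]"]) (auto simp: N_def interval_words_def intro: cong_cons)
      next
        case (Cons q R')
        obtain a b where q: "q = (a,b)" by fastforce
        have ab: "a < b" using R(2) Cons q by auto
        show ?thesis
        proof (cases "num a = num y")
          case True
          then have ay: "a = y" using ninj by (auto dest: injD)
          have c1: "interval_cong ((x,y) # u) ((x,y) # (y,b) # R')"
            using cong_cons[OF R(4), of "(x,y)"] Cons q ay by simp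
          have c2: "interval_cong ((x,y) # (y,b) # R') ((x,b) # R')"
            using interval_cong.sym[OF interval_cong.ctxt[OF interval_cong.comp_rel[of x y b], of "[]" R']]
              xy ab ay by simp
          show ?thesis
            apply (intro exI[of _ "(x,b) # R'"])
            using R Cons q ay xy' ab eq True c1 c2 p
            by (auto simp: N_def interval_words_def intro: interval_cong.trans dest: less_le_trans)
        next
          case False
          show ?thesis
            apply (intro exI[of _ "(x,y) # R"])
            using R Cons q xy' eq False p
            by (auto simp: N_def interval_words_def intro: cong_cons)
        qed
      qed
    qed
  qed
  have Ninj: "inj N" using ninj unfolding N_def by (auto intro!: injI dest: injD)
  show ?thesis
    unfolding embeds_in_fg_free_monoid_def
  proof (intro exI[of _ "\<Union>p. set (f p)"] exI[of _ f] conjI ballI allI impI)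
    show "finite (\<Union>p. set (f p))" by simp
  next
    fix x y :: 'a show "set (f (x,y)) \<subseteq> (\<Union>p. set (f p))" by blast
  next
    fix u v :: "('a \<times> 'a) list"
    assume u: "u \<in> interval_words" and v: "v \<in> interval_words"
    show "concat (map f u) = concat (map f v) \<longleftrightarrow> interval_cong u v"
    proof
      assume e: "concat (map f u) = concat (map f v)"
      obtain R1 where R1: "dec (concat (map f u)) = map N R1" "interval_cong u R1"
        using key[OF u] by blast
      obtain R2 where R2: "dec (concat (map f v)) = map N R2" "interval_cong v R2"
        using key[OF v] by blast
      have "map N R1 = map N R2" using R1 R2 e by simp
      then have "R1 = R2" using Ninj by (simp add: inj_map_eq_map)
      then show "interval_cong u v"
        using R1 R2 by (metis interval_cong.sym interval_cong.trans)
    qed (rule fwd)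
  qed
qed

end
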